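(* Let $X$ be a real Banach space with the Ball Huskable Property ($BHP$). Then for every separable closed subspace $Y$ of $X$ there exists a separable closed subspace $Z$ of $X$ with $Y\subseteq Z$ such that $Z$ has $BHP$.
   Context: For a real Banach space $X$, $B_X$ denotes its closed unit ball. $X$ has the Ball Huskable Property ($BHP$) if for every $\varepsilon>0$ there is a nonempty relatively weakly open subset of $B_X$ (i.e., a nonempty set of the form $U\cap B_X$ with $U$ open in the weak topology of $X$) of diameter less than $\varepsilon$. *)

theory Defs
  imports "HOL-Analysis.Analysis"
begin

definition bdd_lin_functional_on :: "'a::real_normed_vector set \<Rightarrow> ('a \<Rightarrow> real) \<Rightarrow> bool" where
  "bdd_lin_functional_on Z f \<longleftrightarrow>
     (\<forall>x\<in>Z. \<forall>y\<in>Z. f (x + y) = f x + f y) \<and>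
     (\<forall>c. \<forall>x\<in>Z. f (c *\<^sub>R x) = c * f x) \<and>
     (\<exists>C. \<forall>x\<in>Z. \<bar>f x\<bar> \<le> C * norm x)"

definition weak_topology_on :: "'a::real_normed_vector set \<Rightarrow> 'a topology" where
  "weak_topology_on Z = topology_generated_by
     {{z \<in> Z. f z \<in> V} | f V. bdd_lin_functional_on Z f \<and> open V}"

definition unit_ball_of :: "'a::real_normed_vector set \<Rightarrow> 'a set" where
  "unit_ball_of Z = {z \<in> Z. norm z \<le> 1}"

definition BHP :: "'a::real_normed_vector set \<Rightarrow> bool" where
  "BHP Z \<longleftrightarrow> (\<forall>\<epsilon>>0. \<exists>U. openin (weak_topology_on Z) U \<and>
       U \<inter> unit_ball_of Z \<noteq> {} \<and> diameter (U \<inter> unit_ball_of Z) < \<epsilon>)"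

end

theory Submission
  imports Defs
begin

lemma weak_open_restrict:
  assumes "openin (weak_topology_on (UNIV::'a::real_normed_vector set)) U"
  shows "openin (weak_topology_on Z) (U \<inter> Z)"
proof -
  have "generate_topology_on {{z \<in> (UNIV::'a set). f z \<in> V} | f V. bdd_lin_functional_on UNIV f \<and> open V} U"
    using assms unfolding weak_topology_on_def openin_topology_generated_by_iff by simp
  then have "generate_topology_on {{z \<in> Z. f z \<in> V} | f V. bdd_lin_functional_on Z f \<and> open V} (U \<inter> Z)"
  proof (induction rule: generate_topology_on.induct)
    case Empty
    then show ?case by (simp add: generate_topology_on.Empty)
  next
    case (Int a b)
    have "a \<inter> b \<inter> Z = (a \<inter> Z) \<inter> (b \<inter> Z)" by blast
    then show ?case using Int by (simp add: generate_topology_on.Int)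
  next
    case (UN K)
    have "\<Union>K \<inter> Z = \<Union>((\<lambda>k. k \<inter> Z) ` K)" by blast
    have "generate_topology_on {{z \<in> Z. f z \<in> V} | f V. bdd_lin_functional_on Z f \<and> open V} (\<Union>((\<lambda>k. k \<inter> Z) ` K))"
      using UN by (intro generate_topology_on.UN) auto
    then show ?case using \<open>\<Union>K \<inter> Z = _\<close> by (simp only:)
  next
    case (Basis s)
    then obtain f V where s: "s = {z \<in> UNIV. f z \<in> V}" and f: "bdd_lin_functional_on UNIV f" and V: "open V"
      by blast
    have "bdd_lin_functional_on Z f" using f unfolding bdd_lin_functional_on_def by blast
    moreover have "s \<inter> Z = {z \<in> Z. f z \<in> V}" using s by blast
    ultimately show ?case using V by (auto intro!: generate_topology_on.Basis)
  qed
  then show ?thesis unfolding weak_topology_on_def openin_topology_generated_by_iff by simp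
qed

lemma closure_subspace_lemma:
  fixes C :: "'a::real_normed_vector set"
  assumes "0 \<in> C" "\<And>x y. x \<in> C \<Longrightarrow> y \<in> C \<Longrightarrow> x + y \<in> C"
    "\<And>q x. x \<in> C \<Longrightarrow> q \<in> \<rat> \<Longrightarrow> q *\<^sub>R x \<in> C"
  shows "subspace (closure C)"
  unfolding subspace_def
proof (intro conjI ballI allI)
  show "0 \<in> closure C" using assms(1) closure_subset by blast
next
  fix x y assume "x \<in> closure C" "y \<in> closure C"
  then obtain a b where a: "\<forall>n. a n \<in> C" "a \<longlonglongrightarrow> x" and b: "\<forall>n. b n \<in> C" "b \<longlonglongrightarrow> y"
    unfolding closure_sequential by blast
  have "((\<lambda>n. a n + b n) \<longlongrightarrow> x + y) sequentially" using a b by (intro tendsto_add) auto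
  moreover have "\<forall>n. a n + b n \<in> C" using a b assms(2) by blast
  ultimately show "x + y \<in> closure C" unfolding closure_sequential by (intro exI[where x="\<lambda>n. a n + b n"]) simp
next
  fix c :: real and x assume "x \<in> closure C"
  then obtain a where a: "\<forall>n. a n \<in> C" "a \<longlonglongrightarrow> x"
    unfolding closure_sequential by blast
  have "c \<in> closure \<rat>" using Rats_closure_real by simp
  then obtain q where q: "\<forall>n. q n \<in> \<rat>" "q \<longlonglongrightarrow> c"
    unfolding closure_sequential by blast
  have "(\<lambda>n. q n *\<^sub>R a n) \<longlonglongrightarrow> c *\<^sub>R x" using a q by (intro tendsto_scaleR) auto
  moreover have "\<forall>n. q n *\<^sub>R a n \<in> C" using a q assms(3) by blast
  ultimately show "c *\<^sub>R x \<in> closure C" unfolding closure_sequential by (intro exI[where x="\<lambda>n. q n *\<^sub>R a n"]) simp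
qed

theorem mainTheorem3:
  assumes "BHP (UNIV :: 'a::banach set)"
  shows "\<forall>Y :: 'a set. subspace Y \<and> closed Y \<and> separable_space (subtopology euclidean Y) \<longrightarrow>
           (\<exists>Z. subspace Z \<and> closed Z \<and> separable_space (subtopology euclidean Z) \<and>
                Y \<subseteq> Z \<and> BHP Z)"
proof (intro allI impI)
  fix Y :: "'a set"
  assume "subspace Y \<and> closed Y \<and> separable_space (subtopology euclidean Y)"
  then obtain D where D: "countable D" "D \<subseteq> Y" "subtopology euclidean Y closure_of D = Y"
    unfolding separable_space_def by auto
  have YD: "Y \<subseteq> closure D"
    using D by (metis closure_of_subtopology euclidean_closure_of inf.absorb_iff2 inf.orderE inf_le2)
  have "\<forall>n::nat. \<exists>U. openin (weak_topology_on UNIV) U \<and> U \<inter> unit_ball_of (UNIV::'a set) \<noteq> {} \<and>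
       diameter (U \<inter> unit_ball_of UNIV) < 1 / real (Suc n)"
    using assms unfolding BHP_def by auto
  then obtain U where U: "\<And>n. openin (weak_topology_on UNIV) (U n)"
    "\<And>n. U n \<inter> unit_ball_of (UNIV::'a set) \<noteq> {}"
    "\<And>n. diameter (U n \<inter> unit_ball_of UNIV) < 1 / real (Suc n)"
    by metis
  have ex: "\<forall>n. \<exists>y. y \<in> U n \<inter> unit_ball_of (UNIV::'a set)" using U(2) by blast
  obtain x where x0: "\<forall>n. x n \<in> U n \<inter> unit_ball_of (UNIV::'a set)" using choice[OF ex] by blast
  have x: "x n \<in> U n \<inter> unit_ball_of (UNIV::'a set)" for n using x0 by blast
  define A where "A = D \<union> range x"
  define g where "g = (\<lambda>l. sum_list (map (\<lambda>(q,v). of_rat q *\<^sub>R v) l) :: 'a)"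
  define C where "C = g ` lists (UNIV \<times> A)"
  have cA: "countable A" using D unfolding A_def by auto
  have cC: "countable C" unfolding C_def using cA by (intro countable_image countable_lists countable_SIGMA) auto
  have C0: "0 \<in> C" unfolding C_def g_def by (auto intro!: image_eqI[where x="[]"])
  have Cadd: "a + b \<in> C" if ab: "a \<in> C" "b \<in> C" for a b
  proof -
    obtain l1 l2 where "l1 \<in> lists (UNIV \<times> A)" "l2 \<in> lists (UNIV \<times> A)" "a = g l1" "b = g l2"
      using ab unfolding C_def by blast
    then show ?thesis unfolding C_def g_def by (auto intro!: image_eqI[where x="l1 @ l2"])
  qed
  have Cscale: "q *\<^sub>R a \<in> C" if aq: "a \<in> C" "q \<in> \<rat>" for q a
  proof -
    obtain l where l: "l \<in> lists (UNIV \<times> A)" "a = g l"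
      using aq unfolding C_def by blast
    obtain r where r: "q = of_rat r" using aq(2) Rats_cases by blast
    have "g (map (\<lambda>(p,v). (r * p, v)) l) = of_rat r *\<^sub>R g l"
      unfolding g_def by (induction l) (auto simp: of_rat_mult scaleR_add_right)
    moreover have "map (\<lambda>(p,v). (r * p, v)) l \<in> lists (UNIV \<times> A)" using l(1) by auto
    ultimately show ?thesis using l r unfolding C_def by (metis image_eqI)
  qed
  have AC: "A \<subseteq> C"
  proof
    fix a assume "a \<in> A"
    then have "[(1, a)] \<in> lists (UNIV \<times> A)" by auto
    moreover have "g [(1,a)] = a" unfolding g_def by simp
    ultimately show "a \<in> C" unfolding C_def by (metis image_eqI)
  qed
  define Z where "Z = closure C"
  have subZ: "subspace Z" unfolding Z_def using C0 Cadd Cscale by (intro closure_subspace_lemma) auto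
  have clZ: "closed Z" unfolding Z_def by simp
  have sepZ: "separable_space (subtopology euclidean Z)"
    unfolding separable_space_def
  proof (intro exI conjI)
    show "countable C" by (fact cC)
    show "C \<subseteq> topspace (subtopology euclidean Z)" unfolding Z_def using closure_subset by auto
    show "subtopology euclidean Z closure_of C = topspace (subtopology euclidean Z)"
    proof -
      have "closure C \<inter> C = C" using closure_subset by blast
      then show ?thesis unfolding Z_def closure_of_subtopology by simp
    qed
  qed
  have YZ: "Y \<subseteq> Z"
  proof -
    have "closure D \<subseteq> closure C" using AC unfolding A_def by (intro closure_mono) auto
    then show ?thesis using YD unfolding Z_def by auto
  qed
  have xZ: "x n \<in> Z" for n
  proof -
    have "x n \<in> C" using AC unfolding A_def by auto
    then show ?thesis unfolding Z_def using closure_subset by blast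
  qed
  have bhpZ: "BHP Z"
    unfolding BHP_def
  proof (intro allI impI)
    fix e :: real assume "e > 0"
    then obtain n where n: "1 / real (Suc n) < e"
      by (metis nat_approx_posE)
    show "\<exists>V. openin (weak_topology_on Z) V \<and> V \<inter> unit_ball_of Z \<noteq> {} \<and> diameter (V \<inter> unit_ball_of Z) < e"
    proof (intro exI conjI)
      show "openin (weak_topology_on Z) (U n \<inter> Z)" using U(1) by (rule weak_open_restrict)
      show "U n \<inter> Z \<inter> unit_ball_of Z \<noteq> {}"
        using x[of n] xZ[of n] unfolding unit_ball_of_def by auto
      have sub: "U n \<inter> Z \<inter> unit_ball_of Z \<subseteq> U n \<inter> unit_ball_of UNIV"
        unfolding unit_ball_of_def by auto
      have "bounded (U n \<inter> unit_ball_of (UNIV::'a set))"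
        unfolding unit_ball_of_def by (rule bounded_subset[of "cball 0 1"]) auto
      then have "diameter (U n \<inter> Z \<inter> unit_ball_of Z) \<le> diameter (U n \<inter> unit_ball_of UNIV)"
        by (rule diameter_subset[OF sub])
      then show "diameter (U n \<inter> Z \<inter> unit_ball_of Z) < e" using U(3)[of n] n by linarith
    qed
  qed
  show "\<exists>Z. subspace Z \<and> closed Z \<and> separable_space (subtopology euclidean Z) \<and> Y \<subseteq> Z \<and> BHP Z"
    using subZ clZ sepZ YZ bhpZ by blast
qed

end
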